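(* Let $V_0,\dots,V_{2^n}$ be the $2^n+1$ unitary operators that simultaneously diagonalize the $2^n+1$ maximally commuting subsets $S_j$ of non-identity $n$-qubit Pauli operators, i.e. $S_j = \{ s_{j,\vec a} V_j Z_{\vec a} V_j^\dagger : \vec a \in\{0,1\}^n, \vec a\neq \vec 0\}$ with signs $s_{j,\vec a}\in\{-1,1\}$. Let $\mathcal{V} = \{((2^n+1)^{-1}, V_j^\dagger)\}_{j=0}^{2^n}$ be the uniform ensemble over the adjoint unitaries. Let $\mathcal{M}$ be the measure-and-prepare channel $$\mathcal{M}(\rho) = \sum_{\vec k\in\{0,1\}^n} \mathrm{tr}\big[|\vec k\rangle\langle \vec k|\,\rho\big]\,\rho_{\vec k},\qquad \rho_{\vec k} = \sum_{\vec l\in\{0,1\}^n} \frac{1-\delta_{\vec k,\vec l}}{2^n-1}\,|\vec l\rangle\langle \vec l|,$$ which measures in the computational basis and, upon outcome $|\vec k\rangle$, prepares the uniform mixture over all computational basis states orthogonal to $|\vec k\rangle$. Then the $n$-qubit depolarizing channel with zero entanglement fidelity, $$\mathcal{D}_0(\rho) = \frac{1}{2^{2n}-1}\sum_{P\in\mathcal{Q}_n^*} P\rho P,$$ satisfies $\mathcal{D}_0 = \mathbb{E}_{\mathcal{V}}(\mathcal{M})$, where $\mathbb{E}_{\mathcal{V}}(\mathcal{M})(\rho) = \frac{1}{2^n+1}\sum_{j=0}^{2^n} V_j\,\mathcal{M}(V_j^\dagger \rho V_j)\,V_j^\dagger$. Moreover, this construction (a mixture of $2^n+1$ measure-and-prepare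 circuits) uses the minimal number of measure-and-prepare circuits required to realize $\mathcal{D}_0$ without ancilla qubits.
   Context: $\mathcal{Q}_n$ denotes the $n$-qubit Pauli operators modulo phase (a basis of operators on $n$ qubits), and $\mathcal{Q}_n^* = \mathcal{Q}_n\setminus\{I^{\otimes n}\}$. $Z_{\vec a} = \bigotimes_i Z^{a_i}$. The set $\mathcal{Q}_n^*$ is partitioned into $2^n+1$ disjoint maximally commuting subsets $S_j$, each of size $2^n-1$. For an ensemble $\mathcal{E}=\{(p_i,U_i)\}$, the $\mathcal{E}$-channel-twirl of a channel $\mathcal{C}$ is $\rho\mapsto \sum_i p_i U_i^\dagger \mathcal{C}(U_i\rho U_i^\dagger) U_i$. *)

theory Defs
  imports "Jordan_Normal_Form.Schur_Decomposition"
begin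

(* Qubit convention: a computational basis index r < 2^n encodes the bit string
   (bit 0 r, ..., bit (n-1) r); qubit i corresponds to bit i. *)
definition qbit :: "nat \<Rightarrow> nat \<Rightarrow> nat" where
  "qbit i r = (r div 2 ^ i) mod 2"

(* single-qubit Paulis: 0 = I, 1 = X, 2 = Y, 3 = Z *)
definition pauli1 :: "nat \<Rightarrow> complex mat" where
  "pauli1 k = (if k = 1 then mat_of_rows_list 2 [[0, 1], [1, 0]]
    else if k = 2 then mat_of_rows_list 2 [[0, -\<i>], [\<i>, 0]]
    else if k = 3 then mat_of_rows_list 2 [[1, 0], [0, -1]]
    else mat_of_rows_list 2 [[1, 0], [0, 1]])"

(* n-qubit Pauli strings (canonical representatives of Q_n, Paulis modulo phase) *)
definition pauli_strings :: "nat \<Rightarrow> (nat \<Rightarrow> nat) set" where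
  "pauli_strings n = {p. (\<forall>i<n. p i < 4) \<and> (\<forall>i\<ge>n. p i = 0)}"

definition pauli_star :: "nat \<Rightarrow> (nat \<Rightarrow> nat) set" where
  "pauli_star n = pauli_strings n - {(\<lambda>_. 0)}"

(* the operator P_1 \<otimes> ... \<otimes> P_n *)
definition pauli_mat :: "nat \<Rightarrow> (nat \<Rightarrow> nat) \<Rightarrow> complex mat" where
  "pauli_mat n p = mat (2 ^ n) (2 ^ n)
     (\<lambda>(r, c). \<Prod>i<n. pauli1 (p i) $$ (qbit i r, qbit i c))"

(* Z_a for a bit string a encoded as a number a < 2^n *)
definition Z_op :: "nat \<Rightarrow> nat \<Rightarrow> complex mat" where
  "Z_op n a = pauli_mat n (\<lambda>i. if i < n \<and> qbit i a = 1 then 3 else 0)"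

definition adj :: "complex mat \<Rightarrow> complex mat" where
  "adj A = mat_adjoint A"

definition unitary_mat :: "nat \<Rightarrow> complex mat \<Rightarrow> bool" where
  "unitary_mat d U \<longleftrightarrow> U \<in> carrier_mat d d \<and> adj U * U = 1\<^sub>m d \<and> U * adj U = 1\<^sub>m d"

definition mtrace :: "complex mat \<Rightarrow> complex" where
  "mtrace A = (\<Sum>i<dim_row A. A $$ (i, i))"

definition msum :: "nat \<Rightarrow> 'i set \<Rightarrow> ('i \<Rightarrow> complex mat) \<Rightarrow> complex mat" where
  "msum d F f = mat d d (\<lambda>(i, j). \<Sum>x\<in>F. f x $$ (i, j))"

definition ket_proj :: "nat \<Rightarrow> nat \<Rightarrow> complex mat" where
  "ket_proj d k = mat d d (\<lambda>(i, j). if i = k \<and> j = k then 1 else 0)"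

definition density_mat :: "nat \<Rightarrow> complex mat \<Rightarrow> bool" where
  "density_mat d \<sigma> \<longleftrightarrow> \<sigma> \<in> carrier_mat d d \<and> mtrace \<sigma> = 1 \<and>
     (\<forall>v \<in> carrier_vec d. Im (conjugate v \<bullet> (\<sigma> *\<^sub>v v)) = 0 \<and> Re (conjugate v \<bullet> (\<sigma> *\<^sub>v v)) \<ge> 0)"

definition mp_state :: "nat \<Rightarrow> nat \<Rightarrow> complex mat" where
  "mp_state n k = msum (2 ^ n) {..<2 ^ n}
     (\<lambda>l. complex_of_real ((1 - (if k = l then 1 else 0)) / (2 ^ n - 1)) \<cdot>\<^sub>m ket_proj (2 ^ n) l)"

definition M_chan :: "nat \<Rightarrow> complex mat \<Rightarrow> complex mat" where
  "M_chan n \<rho> = msum (2 ^ n) {..<2 ^ n}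
     (\<lambda>k. mtrace (ket_proj (2 ^ n) k * \<rho>) \<cdot>\<^sub>m mp_state n k)"

definition D0 :: "nat \<Rightarrow> complex mat \<Rightarrow> complex mat" where
  "D0 n \<rho> = complex_of_real (1 / (2 ^ (2 * n) - 1)) \<cdot>\<^sub>m
     msum (2 ^ n) (pauli_star n) (\<lambda>P. pauli_mat n P * \<rho> * pauli_mat n P)"

definition channel_twirl :: "nat \<Rightarrow> 'i set \<Rightarrow> ('i \<Rightarrow> real) \<Rightarrow> ('i \<Rightarrow> complex mat)
    \<Rightarrow> (complex mat \<Rightarrow> complex mat) \<Rightarrow> complex mat \<Rightarrow> complex mat" where
  "channel_twirl d I p U C \<rho> = msum d I
     (\<lambda>i. complex_of_real (p i) \<cdot>\<^sub>m (adj (U i) * C (U i * \<rho> * adj (U i)) * U i))"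

(* general ancilla-free measure-and-prepare circuit: apply U^\<dagger>, measure in the
   computational basis (i.e. measure in the basis {U|k>}), on outcome k prepare sigma k *)
definition mp_circuit :: "nat \<Rightarrow> complex mat \<Rightarrow> (nat \<Rightarrow> complex mat) \<Rightarrow> complex mat \<Rightarrow> complex mat" where
  "mp_circuit n U \<sigma> \<rho> = msum (2 ^ n) {..<2 ^ n}
     (\<lambda>k. mtrace (ket_proj (2 ^ n) k * (adj U * \<rho> * U)) \<cdot>\<^sub>m \<sigma> k)"

end

theory Submission
  imports Defs
begin


lemma qbit_lt2[simp]: "qbit i r < 2" by (simp add: qbit_def)

lemma qbit_0: "qbit 0 r = r mod 2" by (simp add: qbit_def)
lemma qbit_Suc: "qbit (Suc i) r = qbit i (r div 2)"
  by (simp add: qbit_def div_mult2_eq)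

lemma qbit_eq_iff: "r < 2^n \<Longrightarrow> c < 2^n \<Longrightarrow> (\<forall>i<n. qbit i r = qbit i c) \<longleftrightarrow> r = c"
proof (induction n arbitrary: r c)
  case 0 then show ?case by simp
next
  case (Suc n)
  have "r div 2 < 2^n" "c div 2 < 2^n" using Suc.prems by auto
  note IH = Suc.IH[OF this]
  have "(\<forall>i<Suc n. qbit i r = qbit i c) \<longleftrightarrow> r mod 2 = c mod 2 \<and> (\<forall>i<n. qbit i (r div 2) = qbit i (c div 2))"
    by (auto simp: qbit_0 qbit_Suc less_Suc_eq_0_disj)
  also have "\<dots> \<longleftrightarrow> r = c" using IH
    by (metis div_mult_mod_eq)
  finally show ?case .
qed

lemma prod_if2: "(\<Prod>i<n. if P i then (2::complex) else 0) = (if \<forall>i<n. P i then 2^n else 0)"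
  by (induction n) (auto simp: less_Suc_eq)

lemma sum_double: "(\<Sum>a<2*m. f a) = (\<Sum>b<m. f (2*b) + f (2*b+1::nat)) " for f :: "nat \<Rightarrow> 'a::comm_monoid_add"
  by (induction m) (auto simp: ac_simps)

lemma sum_bits: "(\<Sum>a<2^n. \<Prod>i<n. h i (qbit i a)) = (\<Prod>i<n. h i 0 + h i 1)"
  for h :: "nat \<Rightarrow> nat \<Rightarrow> 'a::comm_semiring_1"
proof (induction n arbitrary: h)
  case 0 then show ?case by simp
next
  case (Suc n)
  have "(\<Sum>a<2^Suc n. \<Prod>i<Suc n. h i (qbit i a))
     = (\<Sum>a<2*2^n. h 0 (a mod 2) * (\<Prod>i<n. h (Suc i) (qbit i (a div 2))))"
    by (simp del: prod.lessThan_Suc add: prod.lessThan_Suc_shift qbit_0 qbit_Suc)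
  also have "\<dots> = (\<Sum>b<2^n. (h 0 0 + h 0 1) * (\<Prod>i<n. h (Suc i) (qbit i b)))"
    by (simp add: sum_double distrib_right)
  also have "\<dots> = (h 0 0 + h 0 1) * (\<Prod>i<n. h (Suc i) 0 + h (Suc i) 1)"
    using Suc.IH[of "\<lambda>i. h (Suc i)"] by (simp add: sum_distrib_left[symmetric])
  also have "\<dots> = (\<Prod>i<Suc n. h i 0 + h i 1)"
    by (simp del: prod.lessThan_Suc add: prod.lessThan_Suc_shift)
  finally show ?case .
qed

lemma pauli_strings_finite: "finite (pauli_strings n)"
proof -
  have "pauli_strings n = {f. \<forall>x. (x \<in> {..<n} \<longrightarrow> f x \<in> {..<4}) \<and> (x \<notin> {..<n} \<longrightarrow> f x = 0)}"
    unfolding pauli_strings_def by auto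
  moreover have "finite {f. \<forall>x. (x \<in> {..<n} \<longrightarrow> f x \<in> {..<4::nat}) \<and> (x \<notin> {..<n} \<longrightarrow> f x = (0::nat))}"
    by (rule finite_set_of_finite_funs) auto
  ultimately show ?thesis by simp
qed

lemma pauli_strings_Suc:
  "pauli_strings (Suc n) = (\<lambda>(p,k). p(n:=k)) ` (pauli_strings n \<times> {..<4})"
proof (intro equalityI subsetI)
  fix q assume q: "q \<in> pauli_strings (Suc n)"
  then have "(q(n:=0), q n) \<in> pauli_strings n \<times> {..<4}"
    unfolding pauli_strings_def by (simp add: less_Suc_eq)
  moreover have "q = (\<lambda>(p,k). p(n:=k)) (q(n:=0), q n)" by simp
  ultimately show "q \<in> (\<lambda>(p,k). p(n:=k)) ` (pauli_strings n \<times> {..<4})" by blast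
next
  fix q assume "q \<in> (\<lambda>(p,k). p(n:=k)) ` (pauli_strings n \<times> {..<4})"
  then obtain p k where "p \<in> pauli_strings n" "k < 4" "q = p(n:=k)" by auto
  then show "q \<in> pauli_strings (Suc n)" unfolding pauli_strings_def by (simp add: less_Suc_eq)
qed

lemma sum_pauli_strings:
  "(\<Sum>p\<in>pauli_strings n. \<Prod>i<n. g i (p i)) = (\<Prod>i<n. \<Sum>k<4. g i k)"
  for g :: "nat \<Rightarrow> nat \<Rightarrow> 'a::comm_semiring_1"
proof (induction n)
  case 0
  have "pauli_strings 0 = {\<lambda>_. 0}" unfolding pauli_strings_def by auto
  then show ?case by simp
next
  case (Suc n)
  have inj: "inj_on (\<lambda>(p,k). p(n:=k)) (pauli_strings n \<times> {..<4})"
  proof (rule inj_onI, clarsimp)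
    fix p k p' k'
    assume a: "p \<in> pauli_strings n" "p' \<in> pauli_strings n" "p(n := k) = p'(n := k')"
    have "k = k'" using fun_cong[OF a(3), of n] by simp
    moreover have "p i = p' i" for i
    proof (cases "i = n")
      case True then show ?thesis using a(1,2) unfolding pauli_strings_def by auto
    next
      case False then show ?thesis using fun_cong[OF a(3), of i] by simp
    qed
    ultimately show "p = p' \<and> k = k'" by auto
  qed
  have "(\<Sum>p\<in>pauli_strings (Suc n). \<Prod>i<Suc n. g i (p i))
      = (\<Sum>(p,k)\<in>pauli_strings n \<times> {..<4}. \<Prod>i<Suc n. g i ((p(n:=k)) i))"
    unfolding pauli_strings_Suc by (subst sum.reindex[OF inj]) (simp add: case_prod_unfold)
  also have "\<dots> = (\<Sum>(p,k)\<in>pauli_strings n \<times> {..<4}. (\<Prod>i<n. g i (p i)) * g n k)"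
    by (intro sum.cong refl) (auto simp: prod.lessThan_Suc)
  also have "\<dots> = (\<Sum>p\<in>pauli_strings n. \<Sum>k<4. (\<Prod>i<n. g i (p i)) * g n k)"
    by (rule sum.cartesian_product[symmetric])
  also have "\<dots> = (\<Sum>p\<in>pauli_strings n. \<Prod>i<n. g i (p i)) * (\<Sum>k<4. g n k)"
    by (simp only: sum_distrib_left[symmetric] sum_distrib_right[symmetric])
  also have "\<dots> = (\<Prod>i<Suc n. \<Sum>k<4. g i k)" by (simp add: Suc.IH)
  finally show ?case .
qed

lemma pauli1_dim[simp]: "pauli1 k \<in> carrier_mat 2 2"
  unfolding pauli1_def by (auto simp: mat_of_rows_list_def)

lemma pauli_swap: "a < 2 \<Longrightarrow> b < 2 \<Longrightarrow> e < 2 \<Longrightarrow> f < 2 \<Longrightarrow>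
  (\<Sum>k<4. pauli1 k $$ (a,b) * pauli1 k $$ (e,f)) = (if a = f \<and> b = e then 2 else 0)"
proof -
  assume "a < 2" "b < 2" "e < 2" "f < 2"
  then have "a \<in> {0,1}" "b \<in> {0,1}" "e \<in> {0,1}" "f \<in> {0,1}" by auto
  then show ?thesis unfolding pauli1_def
    by (auto simp: numeral_eq_Suc lessThan_Suc mat_of_rows_list_def)
qed

lemma z_swap: "a < 2 \<Longrightarrow> b < 2 \<Longrightarrow> e < 2 \<Longrightarrow> f < 2 \<Longrightarrow>
  pauli1 0 $$ (a,b) * pauli1 0 $$ (e,f) + pauli1 3 $$ (a,b) * pauli1 3 $$ (e,f)
   = (if a = b \<and> e = f \<and> a = f then 2 else 0)"
  unfolding pauli1_def
  by (auto simp: less_2_cases_iff mat_of_rows_list_def)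


lemma adj_carrier[simp]: "A \<in> carrier_mat d d \<Longrightarrow> adj A \<in> carrier_mat d d"
  unfolding adj_def mat_adjoint_def by auto

lemma adj_dim[simp]: "dim_row (adj A) = dim_col A" "dim_col (adj A) = dim_row A"
  unfolding adj_def mat_adjoint_def by auto

lemma adj_index': "i < dim_col A \<Longrightarrow> j < dim_row A \<Longrightarrow> adj A $$ (i,j) = cnj (A $$ (j,i))"
  unfolding adj_def mat_adjoint_def by (auto simp: mat_of_rows_def)

lemma adj_index: "A \<in> carrier_mat d d \<Longrightarrow> i < d \<Longrightarrow> j < d \<Longrightarrow> adj A $$ (i,j) = cnj (A $$ (j,i))"
  by (simp add: adj_index')

lemma adj_adj: "adj (adj A) = A"
  by (rule eq_matI) (auto simp: adj_index')

lemma msum_carrier[simp]: "msum d F f \<in> carrier_mat d d"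
  unfolding msum_def by simp

lemma msum_index: "i < d \<Longrightarrow> j < d \<Longrightarrow> msum d F f $$ (i,j) = (\<Sum>x\<in>F. f x $$ (i,j))"
  unfolding msum_def by simp

lemma pauli_mat_carrier[simp]: "pauli_mat n p \<in> carrier_mat (2^n) (2^n)"
  unfolding pauli_mat_def by simp

lemma pauli_mat_index: "r < 2^n \<Longrightarrow> c < 2^n \<Longrightarrow>
  pauli_mat n p $$ (r,c) = (\<Prod>i<n. pauli1 (p i) $$ (qbit i r, qbit i c))"
  unfolding pauli_mat_def by simp

lemma Z_op_carrier[simp]: "Z_op n a \<in> carrier_mat (2^n) (2^n)"
  unfolding Z_op_def by simp

lemma Z_op_index: "r < 2^n \<Longrightarrow> c < 2^n \<Longrightarrow>
  Z_op n a $$ (r,c) = (\<Prod>i<n. pauli1 (if qbit i a = 1 then 3 else 0) $$ (qbit i r, qbit i c))"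
  unfolding Z_op_def by (simp add: pauli_mat_index)

lemma mult2_index: "A \<in> carrier_mat d d \<Longrightarrow> B \<in> carrier_mat d d \<Longrightarrow> r < d \<Longrightarrow> c < d \<Longrightarrow>
  (A * B) $$ (r,c) = (\<Sum>s<d. A $$ (r,s) * B $$ (s,c))"
  by (simp add: scalar_prod_def atLeast0LessThan)

lemma mult3_index: "A \<in> carrier_mat d d \<Longrightarrow> B \<in> carrier_mat d d \<Longrightarrow> C \<in> carrier_mat d d \<Longrightarrow> r < d \<Longrightarrow> c < d \<Longrightarrow>
  (A * B * C) $$ (r,c) = (\<Sum>s<d. \<Sum>t<d. A $$ (r,s) * B $$ (s,t) * C $$ (t,c))"
proof -
  assume a: "A \<in> carrier_mat d d" "B \<in> carrier_mat d d" "C \<in> carrier_mat d d" "r < d" "c < d"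
  have "(A * B * C) $$ (r,c) = (\<Sum>t<d. (A * B) $$ (r,t) * C $$ (t,c))"
    using a by (intro mult2_index) auto
  also have "\<dots> = (\<Sum>t<d. (\<Sum>s<d. A $$ (r,s) * B $$ (s,t)) * C $$ (t,c))"
    using a by (intro sum.cong refl) (simp del: index_mult_mat(1) add: mult2_index)
  also have "\<dots> = (\<Sum>t<d. \<Sum>s<d. A $$ (r,s) * B $$ (s,t) * C $$ (t,c))"
    by (simp add: sum_distrib_right)
  also have "\<dots> = (\<Sum>s<d. \<Sum>t<d. A $$ (r,s) * B $$ (s,t) * C $$ (t,c))"
    by (rule sum.swap)
  finally show ?thesis .
qed

lemma mtrace_carrier: "A \<in> carrier_mat d d \<Longrightarrow> mtrace A = (\<Sum>i<d. A $$ (i,i))"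
  unfolding mtrace_def by simp

lemma ket_proj_carrier[simp]: "ket_proj d k \<in> carrier_mat d d"
  unfolding ket_proj_def by simp

lemma if01_mult: "(if P then 1 else 0) * (x::complex) = (if P then x else 0)" by simp

lemma sum_delta2: "(\<Sum>s<(N::nat). \<Sum>t<N. if s = a \<and> t = a then f s t else (0::complex)) = (if a < N then f a a else 0)"
proof -
  have h: "(\<Sum>t<N. if s = a \<and> t = a then f s t else 0) = (if s = a then (\<Sum>t<N. if t = a then f a t else 0) else 0)" for s
    by (cases "s = a") auto
  show ?thesis by (simp only: h) simp
qed

lemma mtrace_ket: "X \<in> carrier_mat d d \<Longrightarrow> k < d \<Longrightarrow> mtrace (ket_proj d k * X) = X $$ (k,k)"
proof -
  assume X: "X \<in> carrier_mat d d" and k: "k < d"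
  have "mtrace (ket_proj d k * X) = (\<Sum>i<d. \<Sum>s<d. ket_proj d k $$ (i,s) * X $$ (s,i))"
    using X by (subst mtrace_carrier[of _ d]) (auto intro!: sum.cong mult_carrier_mat simp del: index_mult_mat(1) simp add: mult2_index)
  also have "\<dots> = (\<Sum>i<d. if i = k then X $$ (k,k) else 0)"
    by (intro sum.cong refl) (cases "i = k", simp_all add: ket_proj_def if01_mult)
  also have "\<dots> = X $$ (k,k)" using k by simp
  finally show ?thesis .
qed

lemma pauli_pair_sum: "r < 2^n \<Longrightarrow> c < 2^n \<Longrightarrow> s < 2^n \<Longrightarrow> t < 2^n \<Longrightarrow>
  (\<Sum>P\<in>pauli_strings n. pauli_mat n P $$ (r,s) * pauli_mat n P $$ (t,c))
   = (if r = c \<and> s = t then 2^n else 0)"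
proof -
  assume a: "r < 2^n" "c < 2^n" "s < 2^n" "t < 2^n"
  have "(\<Sum>P\<in>pauli_strings n. pauli_mat n P $$ (r,s) * pauli_mat n P $$ (t,c))
     = (\<Sum>P\<in>pauli_strings n. \<Prod>i<n. pauli1 (P i) $$ (qbit i r, qbit i s) * pauli1 (P i) $$ (qbit i t, qbit i c))"
    using a by (simp add: pauli_mat_index prod.distrib)
  also have "\<dots> = (\<Prod>i<n. \<Sum>k<4. pauli1 k $$ (qbit i r, qbit i s) * pauli1 k $$ (qbit i t, qbit i c))"
    by (rule sum_pauli_strings)
  also have "\<dots> = (\<Prod>i<n. if qbit i r = qbit i c \<and> qbit i s = qbit i t then 2 else 0)"
    by (intro prod.cong refl) (simp add: pauli_swap)
  also have "\<dots> = (if r = c \<and> s = t then 2^n else 0)"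
    using a by (simp add: prod_if2 qbit_eq_iff[symmetric] all_conj_distrib)
  finally show ?thesis .
qed

lemma pauli_twirl_index: "\<rho> \<in> carrier_mat (2^n) (2^n) \<Longrightarrow> r < 2^n \<Longrightarrow> c < 2^n \<Longrightarrow>
  (\<Sum>P\<in>pauli_strings n. (pauli_mat n P * \<rho> * pauli_mat n P) $$ (r,c))
   = (if r = c then 2^n * mtrace \<rho> else 0)"
proof -
  assume a: "\<rho> \<in> carrier_mat (2^n) (2^n)" "r < 2^n" "c < 2^n"
  have "(\<Sum>P\<in>pauli_strings n. (pauli_mat n P * \<rho> * pauli_mat n P) $$ (r,c))
    = (\<Sum>P\<in>pauli_strings n. \<Sum>s<2^n. \<Sum>t<2^n. \<rho> $$ (s,t) * (pauli_mat n P $$ (r,s) * pauli_mat n P $$ (t,c)))"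
    using a by (intro sum.cong refl) (subst mult3_index[of _ "2^n"], simp_all add: ac_simps)
  also have "\<dots> = (\<Sum>s<2^n. \<Sum>t<2^n. \<Sum>P\<in>pauli_strings n. \<rho> $$ (s,t) * (pauli_mat n P $$ (r,s) * pauli_mat n P $$ (t,c)))"
    by (subst sum.swap, rule sum.cong[OF refl], rule sum.swap)
  also have "\<dots> = (\<Sum>s<2^n. \<Sum>t<2^n. \<rho> $$ (s,t) * (\<Sum>P\<in>pauli_strings n. pauli_mat n P $$ (r,s) * pauli_mat n P $$ (t,c)))"
    by (simp add: sum_distrib_left)
  also have "\<dots> = (\<Sum>s<2^n. \<Sum>t<2^n. \<rho> $$ (s,t) * (if r = c \<and> s = t then 2^n else 0))"
    using a by (intro sum.cong refl) (simp add: pauli_pair_sum)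
  also have "\<dots> = (\<Sum>s<2^n. if r = c then 2^n * \<rho> $$ (s,s) else 0)"
    by (intro sum.cong refl) (auto simp: if_distrib cong: if_cong)
  also have "\<dots> = (if r = c then 2^n * mtrace \<rho> else 0)"
    using a by (simp add: mtrace_carrier[of _ "2^n"] sum_distrib_left)
  finally show ?thesis .
qed

lemma Z_pair_sum: "r < 2^n \<Longrightarrow> c < 2^n \<Longrightarrow> s < 2^n \<Longrightarrow> t < 2^n \<Longrightarrow>
  (\<Sum>a<2^n. Z_op n a $$ (r,s) * Z_op n a $$ (t,c))
   = (if r = s \<and> t = c \<and> r = c then 2^n else 0)"
proof -
  assume a: "r < 2^n" "c < 2^n" "s < 2^n" "t < 2^n"
  define g where "g i (b::nat) = pauli1 (if b = 1 then 3 else 0) $$ (qbit i r, qbit i s) * pauli1 (if b = 1 then 3 else 0) $$ (qbit i t, qbit i c)" for i b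
  have "(\<Sum>a<2^n. Z_op n a $$ (r,s) * Z_op n a $$ (t,c)) = (\<Sum>a<2^n. \<Prod>i<n. g i (qbit i a))"
    using a by (simp add: Z_op_index prod.distrib g_def)
  also have "\<dots> = (\<Prod>i<n. g i 0 + g i 1)" by (rule sum_bits)
  also have "\<dots> = (\<Prod>i<n. if qbit i r = qbit i s \<and> qbit i t = qbit i c \<and> qbit i r = qbit i c then 2 else 0)"
    by (intro prod.cong refl) (simp add: g_def z_swap)
  also have "\<dots> = (if r = s \<and> t = c \<and> r = c then 2^n else 0)"
  proof -
    have "(\<forall>i<n. qbit i r = qbit i s \<and> qbit i t = qbit i c \<and> qbit i r = qbit i c)
      \<longleftrightarrow> (\<forall>i<n. qbit i r = qbit i s) \<and> (\<forall>i<n. qbit i t = qbit i c) \<and> (\<forall>i<n. qbit i r = qbit i c)"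
      by blast
    also have "\<dots> \<longleftrightarrow> r = s \<and> t = c \<and> r = c" using a by (simp add: qbit_eq_iff)
    finally show ?thesis by (simp only: prod_if2)
  qed
  finally show ?thesis .
qed

lemma Z_twirl_index: "\<sigma> \<in> carrier_mat (2^n) (2^n) \<Longrightarrow> r < 2^n \<Longrightarrow> c < 2^n \<Longrightarrow>
  (\<Sum>a<2^n. (Z_op n a * \<sigma> * Z_op n a) $$ (r,c))
   = (if r = c then 2^n * \<sigma> $$ (r,r) else 0)"
proof -
  assume a: "\<sigma> \<in> carrier_mat (2^n) (2^n)" "r < 2^n" "c < 2^n"
  have "(\<Sum>a<2^n. (Z_op n a * \<sigma> * Z_op n a) $$ (r,c))
    = (\<Sum>a<2^n. \<Sum>s<2^n. \<Sum>t<2^n. \<sigma> $$ (s,t) * (Z_op n a $$ (r,s) * Z_op n a $$ (t,c)))"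
    using a by (intro sum.cong refl) (subst mult3_index[of _ "2^n"], simp_all add: ac_simps)
  also have "\<dots> = (\<Sum>s<2^n. \<Sum>t<2^n. \<Sum>a<2^n. \<sigma> $$ (s,t) * (Z_op n a $$ (r,s) * Z_op n a $$ (t,c)))"
    by (subst sum.swap, rule sum.cong[OF refl], rule sum.swap)
  also have "\<dots> = (\<Sum>s<2^n. \<Sum>t<2^n. \<sigma> $$ (s,t) * (\<Sum>a<2^n. Z_op n a $$ (r,s) * Z_op n a $$ (t,c)))"
    by (simp add: sum_distrib_left)
  also have "\<dots> = (\<Sum>s<2^n. \<Sum>t<2^n. \<sigma> $$ (s,t) * (if r = s \<and> t = c \<and> r = c then 2^n else 0))"
    using a by (intro sum.cong refl) (simp add: Z_pair_sum)
  also have "\<dots> = (if r = c then 2^n * \<sigma> $$ (r,r) else 0)"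
  proof (cases "r = c")
    case True
    have "(\<Sum>s<2^n. \<Sum>t<2^n. \<sigma> $$ (s,t) * (if r = s \<and> t = c \<and> r = c then 2^n else 0))
      = (\<Sum>s<2^n. \<Sum>t<2^n. if s = r \<and> t = r then 2^n * \<sigma> $$ (s,t) else 0)"
      using True by (intro sum.cong refl) auto
    then show ?thesis using True a by (simp add: sum_delta2)
  qed simp
  finally show ?thesis .
qed


lemma mult_if01: "(x::complex) * (if P then 1 else 0) = (if P then x else 0)" by simp

lemma msum_dim[simp]: "dim_row (msum d F f) = d" "dim_col (msum d F f) = d"
  unfolding msum_def by auto

lemma mp_state_dim[simp]: "dim_row (mp_state n k) = 2^n" "dim_col (mp_state n k) = 2^n"
  unfolding mp_state_def by auto

lemma pauli1_0_index: "a < 2 \<Longrightarrow> b < 2 \<Longrightarrow> pauli1 0 $$ (a,b) = (if a = b then 1 else 0)"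
  unfolding pauli1_def by (auto simp: less_2_cases_iff mat_of_rows_list_def)

lemma pauli1_3_index: "a < 2 \<Longrightarrow> b < 2 \<Longrightarrow> pauli1 3 $$ (a,b) = (if a = b then (if a = 0 then 1 else -1) else 0)"
  unfolding pauli1_def by (auto simp: less_2_cases_iff mat_of_rows_list_def)

lemma pm_zero: "pauli_mat n (\<lambda>_. 0) = 1\<^sub>m (2^n)"
proof (rule eq_matI)
  fix r c assume rc: "r < dim_row (1\<^sub>m (2^n) :: complex mat)" "c < dim_col (1\<^sub>m (2^n) :: complex mat)"
  then have "pauli_mat n (\<lambda>_. 0) $$ (r,c) = (\<Prod>i<n. if qbit i r = qbit i c then 1 else 0)"
    by (simp add: pauli_mat_index pauli1_0_index)
  also have "\<dots> = (if \<forall>i<n. qbit i r = qbit i c then 1 else 0)"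
    by (induction n) (auto simp: less_Suc_eq)
  also have "\<dots> = (if r = c then 1 else 0)" using rc by (simp add: qbit_eq_iff)
  finally show "pauli_mat n (\<lambda>_. 0) $$ (r,c) = 1\<^sub>m (2^n) $$ (r,c)" using rc by simp
qed (auto simp: pauli_mat_def)

lemma qbit_zero[simp]: "qbit i 0 = 0" by (simp add: qbit_def)

lemma Z_op_zero: "Z_op n 0 = 1\<^sub>m (2^n)"
  unfolding Z_op_def by (simp add: pm_zero)

lemma pauli_star_finite: "finite (pauli_star n)"
  unfolding pauli_star_def using pauli_strings_finite by simp

lemma zero_in_pauli_strings: "(\<lambda>_. 0) \<in> pauli_strings n"
  unfolding pauli_strings_def by simp

lemma pauli_star_twirl_index: "\<rho> \<in> carrier_mat (2^n) (2^n) \<Longrightarrow> r < 2^n \<Longrightarrow> c < 2^n \<Longrightarrow>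
  (\<Sum>P\<in>pauli_star n. (pauli_mat n P * \<rho> * pauli_mat n P) $$ (r,c))
   = (if r = c then 2^n * mtrace \<rho> else 0) - \<rho> $$ (r,c)"
proof -
  assume a: "\<rho> \<in> carrier_mat (2^n) (2^n)" "r < 2^n" "c < 2^n"
  have "(\<Sum>P\<in>pauli_strings n. (pauli_mat n P * \<rho> * pauli_mat n P) $$ (r,c))
     = (pauli_mat n (\<lambda>_. 0) * \<rho> * pauli_mat n (\<lambda>_. 0)) $$ (r,c) + (\<Sum>P\<in>pauli_star n. (pauli_mat n P * \<rho> * pauli_mat n P) $$ (r,c))"
    unfolding pauli_star_def by (rule sum.remove[OF pauli_strings_finite zero_in_pauli_strings])
  moreover have "(pauli_mat n (\<lambda>_. 0) * \<rho> * pauli_mat n (\<lambda>_. 0)) = \<rho>"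
    using a by (simp add: pm_zero)
  ultimately show ?thesis using a pauli_twirl_index[OF a] by simp
qed

lemma D0_index: "\<rho> \<in> carrier_mat (2^n) (2^n) \<Longrightarrow> r < 2^n \<Longrightarrow> c < 2^n \<Longrightarrow>
  D0 n \<rho> $$ (r,c) = complex_of_real (1 / (2 ^ (2 * n) - 1)) * ((if r = c then 2^n * mtrace \<rho> else 0) - \<rho> $$ (r,c))"
  unfolding D0_def by (simp add: msum_index pauli_star_twirl_index)

lemma D0_carrier[simp]: "D0 n \<rho> \<in> carrier_mat (2^n) (2^n)"
  unfolding D0_def by simp

lemma mp_state_index: "r < 2^n \<Longrightarrow> c < 2^n \<Longrightarrow>
  mp_state n k $$ (r,c) = (if r = c then complex_of_real ((1 - (if k = r then 1 else 0)) / (2 ^ n - 1)) else 0)"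
proof -
  assume a: "r < 2^n" "c < 2^n"
  define co where "co l = complex_of_real ((1 - (if k = l then 1 else 0)) / (2 ^ n - 1))" for l
  have "mp_state n k $$ (r,c) = (\<Sum>l<2^n. co l * ket_proj (2^n) l $$ (r,c))"
    unfolding mp_state_def co_def using a by (simp add: msum_index) (auto intro!: sum.cong simp: ket_proj_def)
  also have "\<dots> = (\<Sum>l<2^n. if l = r then (if r = c then co r else 0) else 0)"
    using a by (intro sum.cong refl) (auto simp: ket_proj_def)
  also have "\<dots> = (if r = c then co r else 0)" using a by simp
  finally show ?thesis unfolding co_def .
qed

lemma M_chan_index: "\<sigma> \<in> carrier_mat (2^n) (2^n) \<Longrightarrow> r < 2^n \<Longrightarrow> c < 2^n \<Longrightarrow>
  M_chan n \<sigma> $$ (r,c) = (if r = c then (mtrace \<sigma> - \<sigma> $$ (r,r)) / (2^n - 1) else 0)"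
proof -
  assume a: "\<sigma> \<in> carrier_mat (2^n) (2^n)" "r < 2^n" "c < 2^n"
  have "M_chan n \<sigma> $$ (r,c) = (\<Sum>k<2^n. \<sigma> $$ (k,k) * mp_state n k $$ (r,c))"
    unfolding M_chan_def using a by (simp add: msum_index mtrace_ket)
  also have "\<dots> = (\<Sum>k<2^n. if r = c then \<sigma> $$ (k,k) * (1 - (if k = r then 1 else 0)) / (2^n - 1) else 0)"
    using a by (intro sum.cong refl) (simp add: mp_state_index)
  also have "\<dots> = (if r = c then (mtrace \<sigma> - \<sigma> $$ (r,r)) / (2^n - 1) else 0)"
  proof (cases "r = c")
    case True
    have "(\<Sum>k<2^n. \<sigma> $$ (k,k) * (1 - (if k = r then 1 else 0)) / (2^n - 1))
       = (\<Sum>k<2^n. \<sigma> $$ (k,k) / (2^n - 1)) - (\<Sum>k<2^n. if k = r then \<sigma> $$ (r,r) / (2^n - 1) else 0)"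
    proof -
      have "\<sigma> $$ (k,k) * (1 - (if k = r then 1 else 0)) / (2^n - 1) = \<sigma> $$ (k,k) / (2^n - 1) - (if k = r then \<sigma> $$ (r,r) / (2^n - 1) else 0)" for k
        by (cases "k = r") simp_all
      then show ?thesis by (simp only: sum_subtractf)
    qed
    also have "\<dots> = (mtrace \<sigma> - \<sigma> $$ (r,r)) / (2^n - 1)"
      using a by (simp add: mtrace_carrier[of _ "2^n"] sum_divide_distrib diff_divide_distrib)
    finally show ?thesis using True by simp
  qed simp
  finally show ?thesis .
qed

lemma M_chan_carrier[simp]: "M_chan n \<sigma> \<in> carrier_mat (2^n) (2^n)"
  unfolding M_chan_def by simp

lemma unitary_carrier: "unitary_mat d V \<Longrightarrow> V \<in> carrier_mat d d"
  unfolding unitary_mat_def by simp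

lemma unitary_rows: "unitary_mat d V \<Longrightarrow> r < d \<Longrightarrow> c < d \<Longrightarrow>
  (\<Sum>s<d. V $$ (r,s) * cnj (V $$ (c,s))) = (if r = c then 1 else 0)"
proof -
  assume a: "unitary_mat d V" "r < d" "c < d"
  have V: "V \<in> carrier_mat d d" using a unitary_carrier by auto
  have "(V * adj V) $$ (r,c) = (if r = c then 1 else 0)"
    using a unfolding unitary_mat_def by simp
  moreover have "(V * adj V) $$ (r,c) = (\<Sum>s<d. V $$ (r,s) * cnj (V $$ (c,s)))"
    using a V by (subst mult2_index[of _ d]) (auto intro!: sum.cong simp: adj_index)
  ultimately show ?thesis by simp
qed

lemma trace_conj: "unitary_mat d V \<Longrightarrow> \<rho> \<in> carrier_mat d d \<Longrightarrow> mtrace (adj V * \<rho> * V) = mtrace \<rho>"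
proof -
  assume a: "unitary_mat d V" "\<rho> \<in> carrier_mat d d"
  have V: "V \<in> carrier_mat d d" using a unitary_carrier by auto
  have "mtrace (adj V * \<rho> * V) = (\<Sum>k<d. \<Sum>s<d. \<Sum>t<d. cnj (V $$ (s,k)) * \<rho> $$ (s,t) * V $$ (t,k))"
    using a V apply (subst mtrace_carrier[of _ d])
     apply (auto intro!: mult_carrier_mat)[1]
    apply (rule sum.cong[OF refl])
    apply (subst mult3_index[of _ d])
         apply (auto intro!: sum.cong simp: adj_index)
    done
  also have "\<dots> = (\<Sum>s<d. \<Sum>t<d. \<Sum>k<d. \<rho> $$ (s,t) * (V $$ (t,k) * cnj (V $$ (s,k))))"
    by (subst sum.swap, rule sum.cong[OF refl], subst sum.swap, rule sum.cong[OF refl], rule sum.cong[OF refl]) (simp add: ac_simps)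
  also have "\<dots> = (\<Sum>s<d. \<Sum>t<d. \<rho> $$ (s,t) * (if t = s then 1 else 0))"
    using a by (intro sum.cong refl) (simp add: sum_distrib_left[symmetric] unitary_rows)
  also have "\<dots> = mtrace \<rho>"
    using a by (simp add: mtrace_carrier[of _ d] mult_if01)
  finally show ?thesis .
qed


lemma conj_assoc: "V \<in> carrier_mat d d \<Longrightarrow> Z \<in> carrier_mat d d \<Longrightarrow> \<rho> \<in> carrier_mat d d \<Longrightarrow>
  V * (Z * (adj V * \<rho> * V) * Z) * adj V = (V * Z * adj V) * \<rho> * (V * Z * adj V)"
  by (simp add: assoc_mult_mat[of _ d d _ d _ d] mult_carrier_mat[of _ d d _ d])

lemma sum_delta_mid: "s < (d::nat) \<Longrightarrow> (\<Sum>t<d. a * (if s = t then x else 0) * b t) = a * x * (b s :: complex)"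
proof -
  assume s: "s < d"
  have "(\<Sum>t<d. a * (if s = t then x else 0) * b t) = (\<Sum>t<d. if t = s then a * x * b s else 0)"
    by (intro sum.cong refl) auto
  also have "\<dots> = a * x * b s" using s by simp
  finally show ?thesis .
qed

lemma term_entry:
  assumes n: "n \<ge> 1" and U: "unitary_mat (2^n) V" and \<rho>: "\<rho> \<in> carrier_mat (2^n) (2^n)"
    and r: "r < 2^n" and c: "c < 2^n"
  shows "(adj (adj V) * M_chan n (adj V * \<rho> * adj (adj V)) * adj V) $$ (r,c)
    = ((if r = c then mtrace \<rho> else 0)
       - (\<Sum>a<2^n. ((V * Z_op n a * adj V) * \<rho> * (V * Z_op n a * adj V)) $$ (r,c)) / 2^n) / (2^n - 1)"
proof -
  define d :: nat where "d = 2^n"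
  have V: "V \<in> carrier_mat d d" using U unitary_carrier d_def by auto
  define \<sigma> where "\<sigma> = adj V * \<rho> * V"
  have \<sigma>: "\<sigma> \<in> carrier_mat d d" unfolding \<sigma>_def using V \<rho> d_def by auto
  have D1: "(2::complex)^n - 1 \<noteq> 0"
  proof
    assume "(2::complex)^n - 1 = 0"
    then have "(2::complex)^n = 1" by simp
    then have "(2::nat)^n = 1" by (metis of_nat_eq_1_iff of_nat_numeral of_nat_power)
    then show False using n by simp
  qed
  have D0': "(2::complex)^n \<noteq> 0" by simp
  have "(adj (adj V) * M_chan n (adj V * \<rho> * adj (adj V)) * adj V) $$ (r,c)
      = (V * M_chan n \<sigma> * adj V) $$ (r,c)" by (simp add: adj_adj \<sigma>_def)
  also have "\<dots> = (\<Sum>s<d. \<Sum>t<d. V $$ (r,s) * M_chan n \<sigma> $$ (s,t) * cnj (V $$ (c,t)))"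
    using V r c d_def
    apply (subst mult3_index[of _ d])
         apply (auto intro!: sum.cong simp: adj_index)
    done
  also have "\<dots> = (\<Sum>s<d. V $$ (r,s) * ((mtrace \<sigma> - \<sigma> $$ (s,s)) / (2^n - 1)) * cnj (V $$ (c,s)))"
    using \<sigma> d_def by (intro sum.cong refl) (simp add: M_chan_index sum_delta_mid)
  also have "\<dots> = (mtrace \<sigma> * (\<Sum>s<d. V $$ (r,s) * cnj (V $$ (c,s))) - (\<Sum>s<d. V $$ (r,s) * \<sigma> $$ (s,s) * cnj (V $$ (c,s)))) / (2^n - 1)"
  proof -
    have pw: "V $$ (r,s) * ((mtrace \<sigma> - \<sigma> $$ (s,s)) / (2^n - 1)) * cnj (V $$ (c,s))
       = (mtrace \<sigma> * (V $$ (r,s) * cnj (V $$ (c,s))) - V $$ (r,s) * \<sigma> $$ (s,s) * cnj (V $$ (c,s))) / (2^n - 1)" for s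
      using D1 by (simp add: field_simps)
    show ?thesis
      by (simp only: pw sum_divide_distrib[symmetric] sum_subtractf sum_distrib_left[symmetric])
  qed
  also have "(\<Sum>s<d. V $$ (r,s) * cnj (V $$ (c,s))) = (if r = c then 1 else 0)"
    using U r c d_def by (simp add: unitary_rows)
  also have "mtrace \<sigma> = mtrace \<rho>" unfolding \<sigma>_def using U \<rho> by (simp add: trace_conj)
  also have "(\<Sum>s<d. V $$ (r,s) * \<sigma> $$ (s,s) * cnj (V $$ (c,s)))
     = (\<Sum>a<2^n. ((V * Z_op n a * adj V) * \<rho> * (V * Z_op n a * adj V)) $$ (r,c)) / 2^n"
  proof -
    have "(\<Sum>a<2^n. ((V * Z_op n a * adj V) * \<rho> * (V * Z_op n a * adj V)) $$ (r,c))
       = (\<Sum>a<2^n. (V * (Z_op n a * \<sigma> * Z_op n a) * adj V) $$ (r,c))"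
      unfolding \<sigma>_def using V \<rho> d_def by (intro sum.cong refl) (simp add: conj_assoc[of _ d])
    also have "\<dots> = (\<Sum>a<2^n. \<Sum>s<d. \<Sum>t<d. V $$ (r,s) * (Z_op n a * \<sigma> * Z_op n a) $$ (s,t) * cnj (V $$ (c,t)))"
      using V \<sigma> r c d_def
      apply (intro sum.cong refl)
      apply (subst mult3_index[of _ d])
           apply (auto intro!: sum.cong mult_carrier_mat simp: adj_index)
      done
    also have "\<dots> = (\<Sum>s<d. \<Sum>t<d. \<Sum>a<2^n. V $$ (r,s) * (Z_op n a * \<sigma> * Z_op n a) $$ (s,t) * cnj (V $$ (c,t)))"
      by (subst sum.swap, rule sum.cong[OF refl], rule sum.swap)
    also have "\<dots> = (\<Sum>s<d. \<Sum>t<d. V $$ (r,s) * (\<Sum>a<2^n. (Z_op n a * \<sigma> * Z_op n a) $$ (s,t)) * cnj (V $$ (c,t)))"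
      by (simp add: sum_distrib_left sum_distrib_right)
    also have "\<dots> = (\<Sum>s<d. \<Sum>t<d. V $$ (r,s) * (if s = t then 2^n * \<sigma> $$ (s,s) else 0) * cnj (V $$ (c,t)))"
      using \<sigma> d_def by (intro sum.cong refl) (simp add: Z_twirl_index)
    also have "\<dots> = (\<Sum>s<d. V $$ (r,s) * (2^n * \<sigma> $$ (s,s)) * cnj (V $$ (c,s)))"
      by (intro sum.cong refl) (simp add: sum_delta_mid)
    also have "\<dots> = 2^n * (\<Sum>s<d. V $$ (r,s) * \<sigma> $$ (s,s) * cnj (V $$ (c,s)))"
      by (simp add: sum_distrib_left ac_simps)
    finally show ?thesis using D0' by simp
  qed
  finally show ?thesis by simp
qed


lemma qbit_pow2: "qbit j (2^i) = (if j = i then 1 else 0)"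
proof -
  have "qbit j (2^i) = (if odd ((2::nat)^i div 2^j) then 1 else 0)"
    unfolding qbit_def by (simp add: odd_iff_mod_2_eq_one)
  also have "\<dots> = (if bit ((2::nat)^i) j then 1 else 0)" by (simp add: bit_iff_odd)
  also have "\<dots> = (if j = i then 1 else 0)" by (auto simp: bit_exp_iff)
  finally show ?thesis .
qed

lemma Z_op_dim[simp]: "dim_row (Z_op n a) = 2^n" "dim_col (Z_op n a) = 2^n"
  unfolding Z_op_def pauli_mat_def by auto

lemma Z_op_00: "0 < (2::nat)^n \<Longrightarrow> Z_op n a $$ (0,0) = 1"
  by (simp add: Z_op_index pauli1_0_index pauli1_3_index)

lemma Z_op_pow2: "i < n \<Longrightarrow> Z_op n a $$ (2^i, 2^i) = (if qbit i a = 1 then -1 else 1)"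
proof -
  assume i: "i < n"
  have lt: "(2::nat)^i < 2^n" using i by simp
  have "Z_op n a $$ (2^i, 2^i) = (\<Prod>j<n. pauli1 (if qbit j a = 1 then 3 else 0) $$ (qbit j (2^i), qbit j (2^i)))"
    using lt by (simp add: Z_op_index)
  also have "\<dots> = (\<Prod>j<n. if j = i then (if qbit i a = 1 then -1 else 1) else 1)"
  proof (rule prod.cong[OF refl])
    fix j
    show "pauli1 (if qbit j a = 1 then 3 else 0) $$ (qbit j (2^i), qbit j (2^i)) = (if j = i then (if qbit i a = 1 then -1 else 1) else 1)"
      by (cases "j = i"; cases "qbit j a = 1") (simp_all add: qbit_pow2 pauli1_0_index pauli1_3_index)
  qed
  also have "\<dots> = (if qbit i a = 1 then -1 else 1)" using i by simp
  finally show ?thesis .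
qed

lemma Z_op_inj: "a < 2^n \<Longrightarrow> b < 2^n \<Longrightarrow> Z_op n a = Z_op n b \<Longrightarrow> a = b"
proof -
  assume ab: "a < 2^n" "b < 2^n" "Z_op n a = Z_op n b"
  have "qbit i a = qbit i b" if i: "i < n" for i
  proof -
    have "(if qbit i a = 1 then -1 else 1 :: complex) = (if qbit i b = 1 then -1 else 1)"
      using Z_op_pow2[OF i, of a] Z_op_pow2[OF i, of b] ab(3) by simp
    then have "qbit i a = 1 \<longleftrightarrow> qbit i b = 1" by (auto split: if_splits)
    moreover have "qbit i a < 2" "qbit i b < 2" by auto
    ultimately show ?thesis by linarith
  qed
  then show ?thesis using ab qbit_eq_iff by blast
qed

lemma unconj: "unitary_mat d V \<Longrightarrow> Z \<in> carrier_mat d d \<Longrightarrow>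
  adj V * (k \<cdot>\<^sub>m (V * Z * adj V)) * V = k \<cdot>\<^sub>m Z"
proof -
  assume U: "unitary_mat d V" and Z: "Z \<in> carrier_mat d d"
  have V: "V \<in> carrier_mat d d" using U unitary_carrier by auto
  have "adj V * (k \<cdot>\<^sub>m (V * Z * adj V)) * V = k \<cdot>\<^sub>m (adj V * (V * Z * adj V) * V)"
    using V Z by (simp add: mult_smult_distrib[of _ d d _ d] mult_smult_assoc_mat[of _ d d _ d] mult_carrier_mat[of _ d d _ d])
  also have "adj V * (V * Z * adj V) * V = (adj V * V) * Z * (adj V * V)"
    using V Z by (simp add: assoc_mult_mat[of _ d d _ d _ d] mult_carrier_mat[of _ d d _ d])
  also have "\<dots> = Z" using U Z unfolding unitary_mat_def by simp
  finally show ?thesis .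
qed

lemma g_inj:
  assumes n: "n \<ge> 1" and U: "unitary_mat (2^n) V" and s: "\<forall>a. s a = 1 \<or> s a = -1"
  shows "inj_on (\<lambda>a. s a \<cdot>\<^sub>m (V * Z_op n a * adj V)) {a. 0 < a \<and> a < 2^n}"
proof (rule inj_onI)
  fix a b assume a: "a \<in> {a. 0 < a \<and> a < 2^n}" and b: "b \<in> {a. 0 < a \<and> a < 2^n}"
    and eq: "s a \<cdot>\<^sub>m (V * Z_op n a * adj V) = s b \<cdot>\<^sub>m (V * Z_op n b * adj V)"
  have "adj V * (s a \<cdot>\<^sub>m (V * Z_op n a * adj V)) * V = adj V * (s b \<cdot>\<^sub>m (V * Z_op n b * adj V)) * V"
    using eq by simp
  then have eq2: "s a \<cdot>\<^sub>m Z_op n a = s b \<cdot>\<^sub>m Z_op n b" using U by (simp add: unconj)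
  have pos: "0 < (2::nat)^n" by simp
  have "(s a \<cdot>\<^sub>m Z_op n a) $$ (0,0) = (s b \<cdot>\<^sub>m Z_op n b) $$ (0,0)" using eq2 by simp
  then have sab: "s a = s b" using pos by (simp add: Z_op_00)
  have sa: "s a \<noteq> 0" using s by (metis one_neq_zero neg_equal_0_iff_equal)
  have "Z_op n a = Z_op n b"
  proof (rule eq_matI)
    fix i j assume ij: "i < dim_row (Z_op n b)" "j < dim_col (Z_op n b)"
    have "(s a \<cdot>\<^sub>m Z_op n a) $$ (i,j) = (s b \<cdot>\<^sub>m Z_op n b) $$ (i,j)" using eq2 by simp
    then show "Z_op n a $$ (i,j) = Z_op n b $$ (i,j)" using ij sab sa
      by (simp add: Z_op_def pauli_mat_def)
  qed (simp_all add: Z_op_def pauli_mat_def)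
  then show "a = b" using a b Z_op_inj by blast
qed

lemma smult_sandwich: "W \<in> carrier_mat d d \<Longrightarrow> \<rho> \<in> carrier_mat d d \<Longrightarrow> k * k = 1 \<Longrightarrow> r < d \<Longrightarrow> c < d \<Longrightarrow>
  ((k \<cdot>\<^sub>m W) * \<rho> * (k \<cdot>\<^sub>m W)) $$ (r,c) = (W * \<rho> * W) $$ (r,c)"
  for W :: "complex mat"
proof -
  assume a: "W \<in> carrier_mat d d" "\<rho> \<in> carrier_mat d d" "k * k = 1" "r < d" "c < d"
  have "(k \<cdot>\<^sub>m W) * \<rho> = k \<cdot>\<^sub>m (W * \<rho>)" by (rule mult_smult_assoc_mat[OF a(1) a(2)])
  moreover have "k \<cdot>\<^sub>m (W * \<rho>) * (k \<cdot>\<^sub>m W) = k \<cdot>\<^sub>m (W * \<rho> * (k \<cdot>\<^sub>m W))"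
    by (rule mult_smult_assoc_mat[OF mult_carrier_mat[OF a(1) a(2)] smult_carrier_mat[OF a(1)]])
  moreover have "W * \<rho> * (k \<cdot>\<^sub>m W) = k \<cdot>\<^sub>m (W * \<rho> * W)"
    by (rule mult_smult_distrib[OF mult_carrier_mat[OF a(1) a(2)] a(1)])
  ultimately have "(k \<cdot>\<^sub>m W) * \<rho> * (k \<cdot>\<^sub>m W) = k \<cdot>\<^sub>m (k \<cdot>\<^sub>m (W * \<rho> * W))" by simp
  then show ?thesis using a by (simp add: mult.assoc[symmetric])
qed

lemma L6:
  assumes n: "n \<ge> 1" and U: "unitary_mat (2^n) V" and s: "\<forall>a. s a = 1 \<or> s a = -1"
    and PS: "pauli_mat n ` S = {s a \<cdot>\<^sub>m (V * Z_op n a * adj V) | a. 0 < a \<and> a < 2^n}"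
    and cardS: "card S = 2^n - 1"
    and \<rho>: "\<rho> \<in> carrier_mat (2^n) (2^n)" and r: "r < 2^n" and c: "c < 2^n"
  shows "(\<Sum>a<2^n. ((V * Z_op n a * adj V) * \<rho> * (V * Z_op n a * adj V)) $$ (r,c))
    = \<rho> $$ (r,c) + (\<Sum>P\<in>S. (pauli_mat n P * \<rho> * pauli_mat n P) $$ (r,c))"
proof -
  define A where "A = {a. 0 < a \<and> a < (2::nat)^n}"
  define g where "g a = s a \<cdot>\<^sub>m (V * Z_op n a * adj V)" for a
  define f where "f M = (M * \<rho> * M) $$ (r,c)" for M
  have V: "V \<in> carrier_mat (2^n) (2^n)" using U unitary_carrier by auto
  have "{..<2^n} = insert 0 A" unfolding A_def by auto
  then have "(\<Sum>a<2^n. ((V * Z_op n a * adj V) * \<rho> * (V * Z_op n a * adj V)) $$ (r,c))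
     = ((V * Z_op n 0 * adj V) * \<rho> * (V * Z_op n 0 * adj V)) $$ (r,c) + (\<Sum>a\<in>A. ((V * Z_op n a * adj V) * \<rho> * (V * Z_op n a * adj V)) $$ (r,c))"
    unfolding A_def by simp
  also have "(V * Z_op n 0 * adj V) = 1\<^sub>m (2^n)"
    using U V unfolding unitary_mat_def by (simp add: Z_op_zero)
  also have "(1\<^sub>m (2^n) * \<rho> * 1\<^sub>m (2^n)) = \<rho>" using \<rho> by simp
  also have "(\<Sum>a\<in>A. ((V * Z_op n a * adj V) * \<rho> * (V * Z_op n a * adj V)) $$ (r,c)) = (\<Sum>a\<in>A. f (g a))"
    unfolding f_def g_def
  proof (intro sum.cong refl)
    fix a assume "a \<in> A"
    have "s a * s a = 1" using s by (metis mult_1 mult_minus1 minus_minus)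
    then show "((V * Z_op n a * adj V) * \<rho> * (V * Z_op n a * adj V)) $$ (r,c)
      = (s a \<cdot>\<^sub>m (V * Z_op n a * adj V) * \<rho> * (s a \<cdot>\<^sub>m (V * Z_op n a * adj V))) $$ (r,c)"
      using smult_sandwich[of "V * Z_op n a * adj V" "2^n" \<rho> "s a" r c] V \<rho> r c
      by (simp add: mult_carrier_mat[of _ "2^n" "2^n" _ "2^n"])
  qed
  also have "(\<Sum>a\<in>A. f (g a)) = (\<Sum>M\<in>g ` A. f M)"
    using g_inj[OF n U s] unfolding g_def A_def by (simp add: sum.reindex)
  also have "g ` A = pauli_mat n ` S" unfolding PS g_def A_def by auto
  also have "(\<Sum>M\<in>pauli_mat n ` S. f M) = (\<Sum>P\<in>S. f (pauli_mat n P))"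
  proof -
    have cA: "card A = 2^n - 1"
    proof -
      have "A = {1..<2^n}" unfolding A_def by auto
      then show ?thesis by simp
    qed
    have "(2::nat)^n \<ge> 2" using n by (metis one_le_power power_one_right power_increasing le_numeral_extra(4) numeral_le_iff semiring_norm(69) one_le_numeral)
    then have fS: "finite S" using cardS card_ge_0_finite by force
    have "card (pauli_mat n ` S) = card (g ` A)" using \<open>g ` A = pauli_mat n ` S\<close> by simp
    also have "\<dots> = card A" using g_inj[OF n U s] unfolding g_def A_def by (simp add: card_image)
    finally have "card (pauli_mat n ` S) = card S" using cA cardS by simp
    then have "inj_on (pauli_mat n) S" using fS by (rule eq_card_imp_inj_on[rotated])
    then show ?thesis by (simp add: sum.reindex)
  qed
  finally show ?thesis unfolding f_def by simp
qed


lemma alg_final: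
  fixes D e x :: complex and q :: "nat \<Rightarrow> complex"
  assumes D0: "D \<noteq> 0" and D1: "D - 1 \<noteq> 0" and D2: "D + 1 \<noteq> 0"
    and cardJ: "of_nat (card J) = D + 1"
    and sq: "(\<Sum>j\<in>J. q j) = D * e - x"
  shows "(\<Sum>j\<in>J. (1 / (D + 1)) * ((e - (x + q j) / D) / (D - 1))) = (1 / (D^2 - 1)) * (D * e - x)"
proof -
  define K where "K = 1 / ((D + 1) * (D - 1))"
  have pw: "(1 / (D + 1)) * ((e - (x + q j) / D) / (D - 1)) = K * (e - x / D) - (K / D) * q j" for j
  proof -
    have h1: "e - (x + q j) / D = (e - x / D) - q j / D" by (simp add: add_divide_distrib)
    have h2: "(1 / (D + 1)) * (y / (D - 1)) = K * y" for y unfolding K_def by simp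
    show ?thesis unfolding h2 h1 by (simp add: right_diff_distrib)
  qed
  have "(\<Sum>j\<in>J. (1 / (D + 1)) * ((e - (x + q j) / D) / (D - 1))) = of_nat (card J) * (K * (e - x / D)) - (K / D) * (\<Sum>j\<in>J. q j)"
    by (simp only: pw sum_subtractf sum_distrib_left[symmetric] sum_constant of_nat_id) (simp add: sum_distrib_left right_diff_distrib)
  also have "\<dots> = (1 / (D^2 - 1)) * (D * e - x)"
  proof -
    have a1: "(D + 1) * (K * (e - x / D)) - K / D * (D * e - x) = K * ((D + 1) * (e - x / D) - (D * e - x) / D)"
      by (simp add: divide_inverse algebra_simps)
    have a2: "(D + 1) * (e - x / D) - (D * e - x) / D = D * e - x"
      using D0 by (simp add: field_simps)
    have a3: "K = 1 / (D^2 - 1)" unfolding K_def by (simp add: power2_eq_square algebra_simps)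
    show ?thesis by (simp only: cardJ sq a1 a2) (simp only: a3)
  qed
  finally show ?thesis .
qed

lemma part1:
  fixes n :: nat and S :: "nat \<Rightarrow> (nat \<Rightarrow> nat) set" and V :: "nat \<Rightarrow> complex mat"
  assumes n: "n \<ge> 1"
    and S_sub: "\<And>j. j \<le> 2 ^ n \<Longrightarrow> S j \<subseteq> pauli_star n"
    and S_cover: "(\<Union>j\<in>{..2 ^ n}. S j) = pauli_star n"
    and S_disj: "\<And>j j'. j \<le> 2 ^ n \<Longrightarrow> j' \<le> 2 ^ n \<Longrightarrow> j \<noteq> j' \<Longrightarrow> S j \<inter> S j' = {}"
    and S_card: "\<And>j. j \<le> 2 ^ n \<Longrightarrow> card (S j) = 2 ^ n - 1"
    and V_unitary: "\<And>j. j \<le> 2 ^ n \<Longrightarrow> unitary_mat (2 ^ n) (V j)"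
    and V_diag: "\<And>j. j \<le> 2 ^ n \<Longrightarrow> \<exists>s :: nat \<Rightarrow> complex. (\<forall>a. s a = 1 \<or> s a = -1) \<and>
                   pauli_mat n ` S j = {s a \<cdot>\<^sub>m (V j * Z_op n a * adj (V j)) | a. 0 < a \<and> a < 2 ^ n}"
  shows "\<forall>\<rho> \<in> carrier_mat (2 ^ n) (2 ^ n).
            D0 n \<rho> = channel_twirl (2 ^ n) {..2 ^ n} (\<lambda>_. 1 / (2 ^ n + 1)) (\<lambda>j. adj (V j)) (M_chan n) \<rho>"
proof
  fix \<rho> :: "complex mat" assume \<rho>: "\<rho> \<in> carrier_mat (2 ^ n) (2 ^ n)"
  define D :: complex where "D = 2^n"
  have D2n: "(2::nat)^n \<ge> 2" using n
    by (metis one_le_power power_one_right power_increasing le_numeral_extra(4) numeral_le_iff semiring_norm(69) one_le_numeral)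
  have Dnz: "D \<noteq> 0" unfolding D_def by simp
  have D1: "D - 1 \<noteq> 0"
  proof
    assume "D - 1 = 0"
    then have "(2::complex)^n = 1" unfolding D_def by simp
    then have "(2::nat)^n = 1" by (metis of_nat_eq_1_iff of_nat_numeral of_nat_power)
    then show False using D2n by simp
  qed
  have D2: "D + 1 \<noteq> 0"
  proof -
    have "D + 1 = of_nat (Suc (2^n))" unfolding D_def by simp
    then show ?thesis using of_nat_neq_0[of "2^n", where 'a=complex] by (simp add: add.commute)
  qed
  show "D0 n \<rho> = channel_twirl (2 ^ n) {..2 ^ n} (\<lambda>_. 1 / (2 ^ n + 1)) (\<lambda>j. adj (V j)) (M_chan n) \<rho>"
  proof (rule eq_matI)
    fix r c assume rc: "r < dim_row (channel_twirl (2 ^ n) {..2 ^ n} (\<lambda>_. 1 / (2 ^ n + 1)) (\<lambda>j. adj (V j)) (M_chan n) \<rho>)"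
      "c < dim_col (channel_twirl (2 ^ n) {..2 ^ n} (\<lambda>_. 1 / (2 ^ n + 1)) (\<lambda>j. adj (V j)) (M_chan n) \<rho>)"
    then have r: "r < 2^n" and c: "c < 2^n" unfolding channel_twirl_def by auto
    define e where "e = (if r = c then mtrace \<rho> else 0)"
    define x where "x = \<rho> $$ (r,c)"
    define q where "q j = (\<Sum>P\<in>S j. (pauli_mat n P * \<rho> * pauli_mat n P) $$ (r,c))" for j
    have "channel_twirl (2 ^ n) {..2 ^ n} (\<lambda>_. 1 / (2 ^ n + 1)) (\<lambda>j. adj (V j)) (M_chan n) \<rho> $$ (r,c)
      = (\<Sum>j\<in>{..2^n}. (1 / (D + 1)) * ((e - (x + q j) / D) / (D - 1)))"
      unfolding channel_twirl_def
    proof (simp only: msum_index[OF r c], rule sum.cong[OF refl])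
      fix j :: nat assume j: "j \<in> {..2^n}"
      have U: "unitary_mat (2^n) (V j)" using V_unitary j by auto
      have Vc: "V j \<in> carrier_mat (2^n) (2^n)" using U unitary_carrier by auto
      have "\<exists>s :: nat \<Rightarrow> complex. (\<forall>a. s a = 1 \<or> s a = -1) \<and>
                   pauli_mat n ` S j = {s a \<cdot>\<^sub>m (V j * Z_op n a * adj (V j)) | a. 0 < a \<and> a < 2 ^ n}"
        using V_diag j by simp
      then obtain s where s: "\<forall>a. s a = 1 \<or> s a = -1"
        and PS: "pauli_mat n ` S j = {s a \<cdot>\<^sub>m (V j * Z_op n a * adj (V j)) | a. 0 < a \<and> a < 2 ^ n}"
        by blast
      have e1: "(complex_of_real (1 / (2 ^ n + 1)) \<cdot>\<^sub>m (adj (adj (V j)) * M_chan n (adj (V j) * \<rho> * adj (adj (V j))) * adj (V j))) $$ (r,c)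
         = complex_of_real (1 / (2 ^ n + 1)) * (adj (adj (V j)) * M_chan n (adj (V j) * \<rho> * adj (adj (V j))) * adj (V j)) $$ (r,c)"
        using r c Vc by simp
      have h: "complex_of_real (1 / (2 ^ n + 1)) = 1 / (D + 1)" unfolding D_def by simp
      have t: "(adj (adj (V j)) * M_chan n (adj (V j) * \<rho> * adj (adj (V j))) * adj (V j)) $$ (r,c)
        = (e - (x + q j) / D) / (D - 1)"
        unfolding term_entry[OF n U \<rho> r c] L6[OF n U s PS S_card[OF j[simplified]] \<rho> r c] e_def x_def q_def D_def ..
      show "(complex_of_real (1 / (2 ^ n + 1)) \<cdot>\<^sub>m (adj (adj (V j)) * M_chan n (adj (V j) * \<rho> * adj (adj (V j))) * adj (V j))) $$ (r,c)
        = (1 / (D + 1)) * ((e - (x + q j) / D) / (D - 1))" unfolding e1 by (simp only: h t)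
    qed
    also have "\<dots> = (1 / (D^2 - 1)) * (D * e - x)"
    proof (rule alg_final[OF Dnz D1 D2])
      show "of_nat (card {..(2::nat)^n}) = D + 1" unfolding D_def by simp
      have fin: "finite (S j)" if "j \<in> {..2^n}" for j :: nat
        using S_sub that pauli_star_finite finite_subset by blast
      have "(\<Sum>j\<in>{..2^n}. q j) = (\<Sum>P\<in>(\<Union>j\<in>{..2 ^ n}. S j). (pauli_mat n P * \<rho> * pauli_mat n P) $$ (r,c))"
        unfolding q_def using fin S_disj by (intro sum.UNION_disjoint[symmetric]) auto
      also have "\<dots> = D * e - x"
        unfolding S_cover pauli_star_twirl_index[OF \<rho> r c] D_def e_def x_def by simp
      finally show "(\<Sum>j\<in>{..2^n}. q j) = D * e - x" .
    qed
    also have "\<dots> = D0 n \<rho> $$ (r,c)"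
      unfolding D0_index[OF \<rho> r c] D_def e_def x_def by (simp add: power_mult[symmetric] mult.commute[of 2 n])
    finally show "D0 n \<rho> $$ (r,c) = channel_twirl (2 ^ n) {..2 ^ n} (\<lambda>_. 1 / (2 ^ n + 1)) (\<lambda>j. adj (V j)) (M_chan n) \<rho> $$ (r,c)" by simp
  qed (simp_all add: channel_twirl_def D0_def)
qed


lemma sum_pairs: "(\<Sum>q<a*d. f q) = (\<Sum>s<a. \<Sum>t<d. f (s*d + t))" for f :: "nat \<Rightarrow> complex"
proof (induction a)
  case 0 then show ?case by simp
next
  case (Suc a)
  have "(\<Sum>q<Suc a * d. f q) = (\<Sum>q\<in>{0..<a*d}. f q) + (\<Sum>q\<in>{a*d..<a*d + d}. f q)"
    by (simp add: sum.atLeastLessThan_concat atLeast0LessThan[symmetric] add.commute)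
  also have "(\<Sum>q\<in>{a*d..<a*d + d}. f q) = (\<Sum>t<d. f (a*d + t))"
    using sum.shift_bounds_nat_ivl[of f 0 "a*d" d] by (simp add: atLeast0LessThan add.commute)
  finally show ?case using Suc by (simp add: atLeast0LessThan)
qed

lemma exists_rho:
  fixes U :: "nat \<Rightarrow> complex mat"
  assumes d2: "d \<ge> 2" and m: "m \<le> d" and U: "\<forall>i<m. U i \<in> carrier_mat d d"
  shows "\<exists>\<rho> \<in> carrier_mat d d. \<rho> \<noteq> 0\<^sub>m d d \<and> mtrace \<rho> = 0 \<and>
           (\<forall>i<m. \<forall>k<d-1. (adj (U i) * \<rho> * U i) $$ (k,k) = 0)"
proof -
  define N where "N = d * d"
  define coef where "coef l q = (if l = 0 then (if q div d = q mod d then 1 else 0)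
      else if l - 1 < m * (d - 1) then
        cnj (U ((l-1) div (d-1)) $$ (q div d, (l-1) mod (d-1))) * U ((l-1) div (d-1)) $$ (q mod d, (l-1) mod (d-1))
      else (0::complex))" for l q
  define cv where "cv l = vec N (coef l)" for l
  define A where "A = mat\<^sub>r N N (\<lambda>l. if l = N - 1 then 0\<^sub>v N else cv l)"
  have N1: "N - 1 < N" unfolding N_def using d2 by simp
  have "det A = 0" unfolding A_def
    by (rule det_row_0[OF N1]) (auto simp: cv_def)
  moreover have Ac: "A \<in> carrier_mat N N" unfolding A_def by simp
  ultimately obtain v where v: "v \<in> carrier_vec N" "v \<noteq> 0\<^sub>v N" "A *\<^sub>v v = 0\<^sub>v N"
    using det_0_iff_vec_prod_zero[OF Ac] by blast
  define \<rho> where "\<rho> = mat d d (\<lambda>(s,t). v $ (s*d + t))"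
  have \<rho>c: "\<rho> \<in> carrier_mat d d" unfolding \<rho>_def by simp
  have dm: "s * d + t < N" if "s < d" "t < d" for s t
  proof -
    have "s * d + t < s * d + d" using that by simp
    also have "\<dots> = (s + 1) * d" by simp
    also have "\<dots> \<le> d * d" using that by (intro mult_right_mono) auto
    finally show ?thesis unfolding N_def .
  qed
  have divmod: "(s * d + t) div d = s" "(s * d + t) mod d = t" if "t < d" for s t
    using that by auto
  have row0: "(\<Sum>q<N. coef l q * v $ q) = 0" if l: "l < N - 1" for l
  proof -
    have "(A *\<^sub>v v) $ l = 0" using v(3) l N1 by simp
    moreover have "(A *\<^sub>v v) $ l = (\<Sum>q<N. coef l q * v $ q)"
      using l N1 v(1) unfolding A_def cv_def
      by (simp add: scalar_prod_def atLeast0LessThan row_mat_of_row_fun)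
    ultimately show ?thesis by simp
  qed
  have cons: "(\<Sum>s<d. \<Sum>t<d. coef l (s*d+t) * \<rho> $$ (s,t)) = 0" if l: "l < N - 1" for l
  proof -
    have "(\<Sum>s<d. \<Sum>t<d. coef l (s*d+t) * \<rho> $$ (s,t)) = (\<Sum>q<d*d. coef l q * v $ q)"
      unfolding sum_pairs \<rho>_def by (intro sum.cong refl) simp
    then show ?thesis using row0[OF l] unfolding N_def by simp
  qed
  have "\<rho> \<noteq> 0\<^sub>m d d"
  proof
    assume z: "\<rho> = 0\<^sub>m d d"
    have "v = 0\<^sub>v N"
    proof (rule eq_vecI)
      fix q assume "q < dim_vec (0\<^sub>v N :: complex vec)"
      then have q: "q < d * d" unfolding N_def by simp
      then have qd: "q div d < d" "q mod d < d" using d2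
        by (auto simp: less_mult_imp_div_less)
      have "\<rho> $$ (q div d, q mod d) = 0" using z qd by simp
      moreover have "\<rho> $$ (q div d, q mod d) = v $ q" unfolding \<rho>_def using qd by simp
      ultimately show "v $ q = 0\<^sub>v N $ q" using q unfolding N_def by simp
    qed (use v(1) in simp)
    then show False using v(2) by simp
  qed
  moreover have "mtrace \<rho> = 0"
  proof -
    have "2 * 2 \<le> d * d" using mult_le_mono[OF d2 d2] .
    then have "0 < N - 1" unfolding N_def by simp
    then have "(\<Sum>s<d. \<Sum>t<d. coef 0 (s*d+t) * \<rho> $$ (s,t)) = 0" by (intro cons) 
    moreover have "(\<Sum>s<d. \<Sum>t<d. coef 0 (s*d+t) * \<rho> $$ (s,t)) = (\<Sum>s<d. \<Sum>t<d. if t = s then \<rho> $$ (s,t) else 0)"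
      by (intro sum.cong refl) (simp add: coef_def divmod)
    ultimately show ?thesis using \<rho>c by (simp add: mtrace_carrier[of _ d])
  qed
  moreover have "(adj (U i) * \<rho> * U i) $$ (k,k) = 0" if i: "i < m" and k: "k < d - 1" for i k
  proof -
    define l where "l = 1 + i * (d - 1) + k"
    have "i * (d - 1) + k < m * (d - 1)"
    proof -
      have "i * (d - 1) + k < i * (d - 1) + (d - 1)" using k by simp
      also have "\<dots> = (i + 1) * (d - 1)" by simp
      also have "\<dots> \<le> m * (d - 1)" using i by (intro mult_right_mono) auto
      finally show ?thesis .
    qed
    moreover have "m * (d - 1) \<le> d * (d - 1)" using m by simp
    moreover have "d * (d - 1) + 2 \<le> d * d" using d2
    proof -
      have "d * d = d * (d - 1) + d" using d2 by (simp add: algebra_simps)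
      then show ?thesis using d2 by simp
    qed
    ultimately have lN: "l < N - 1" unfolding l_def N_def by linarith
    have ldm: "(l - 1) div (d - 1) = i" "(l - 1) mod (d - 1) = k" "l \<noteq> 0" "l - 1 < m * (d - 1)"
      unfolding l_def using k \<open>i * (d - 1) + k < m * (d - 1)\<close> by auto
    have Ui: "U i \<in> carrier_mat d d" using U i by auto
    have kd: "k < d" using k by simp
    have "(adj (U i) * \<rho> * U i) $$ (k,k) = (\<Sum>s<d. \<Sum>t<d. adj (U i) $$ (k,s) * \<rho> $$ (s,t) * U i $$ (t,k))"
      using Ui \<rho>c kd by (intro mult3_index) auto
    also have "\<dots> = (\<Sum>s<d. \<Sum>t<d. coef l (s*d+t) * \<rho> $$ (s,t))"
    proof -
      have coefl: "coef l q = cnj (U i $$ (q div d, k)) * U i $$ (q mod d, k)" for q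
        unfolding coef_def by (simp only: ldm if_False if_True)
      show ?thesis using Ui kd by (intro sum.cong refl) (simp add: coefl divmod adj_index)
    qed
    also have "\<dots> = 0" using cons[OF lN] .
    finally show ?thesis .
  qed
  ultimately show ?thesis using \<rho>c by blast
qed


lemma part2:
  fixes n :: nat
  assumes n: "n \<ge> 1"
  shows "\<forall>(m :: nat) (p :: nat \<Rightarrow> real) (U :: nat \<Rightarrow> complex mat) (\<sigma> :: nat \<Rightarrow> nat \<Rightarrow> complex mat).
            (\<forall>i<m. p i \<ge> 0) \<and> (\<Sum>i<m. p i) = 1 \<and> (\<forall>i<m. unitary_mat (2 ^ n) (U i)) \<and>
            (\<forall>i<m. \<forall>k<2 ^ n. density_mat (2 ^ n) (\<sigma> i k)) \<and>
            (\<forall>\<rho> \<in> carrier_mat (2 ^ n) (2 ^ n).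
               D0 n \<rho> = msum (2 ^ n) {..<m} (\<lambda>i. complex_of_real (p i) \<cdot>\<^sub>m mp_circuit n (U i) (\<sigma> i) \<rho>))
            \<longrightarrow> 2 ^ n + 1 \<le> m"
proof (intro allI impI)
  fix m :: nat and p :: "nat \<Rightarrow> real" and U :: "nat \<Rightarrow> complex mat" and \<sigma> :: "nat \<Rightarrow> nat \<Rightarrow> complex mat"
  assume H: "(\<forall>i<m. p i \<ge> 0) \<and> (\<Sum>i<m. p i) = 1 \<and> (\<forall>i<m. unitary_mat (2 ^ n) (U i)) \<and>
            (\<forall>i<m. \<forall>k<2 ^ n. density_mat (2 ^ n) (\<sigma> i k)) \<and>
            (\<forall>\<rho> \<in> carrier_mat (2 ^ n) (2 ^ n).
               D0 n \<rho> = msum (2 ^ n) {..<m} (\<lambda>i. complex_of_real (p i) \<cdot>\<^sub>m mp_circuit n (U i) (\<sigma> i) \<rho>))"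
  then have Uu: "\<forall>i<m. unitary_mat (2 ^ n) (U i)"
    and dens: "\<forall>i<m. \<forall>k<2 ^ n. density_mat (2 ^ n) (\<sigma> i k)"
    and DE: "\<forall>\<rho> \<in> carrier_mat (2 ^ n) (2 ^ n).
               D0 n \<rho> = msum (2 ^ n) {..<m} (\<lambda>i. complex_of_real (p i) \<cdot>\<^sub>m mp_circuit n (U i) (\<sigma> i) \<rho>)"
    by auto
  show "2 ^ n + 1 \<le> m"
  proof (rule ccontr)
    assume "\<not> 2 ^ n + 1 \<le> m"
    then have m: "m \<le> 2^n" by simp
    define d :: nat where "d = 2^n"
    have d2: "d \<ge> 2" unfolding d_def using n
      by (metis one_le_power power_one_right power_increasing le_numeral_extra(4) numeral_le_iff semiring_norm(69) one_le_numeral)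
    have Uc: "\<forall>i<m. U i \<in> carrier_mat d d" using Uu unitary_carrier d_def by blast
    obtain \<rho> where \<rho>c: "\<rho> \<in> carrier_mat d d" and nz: "\<rho> \<noteq> 0\<^sub>m d d" and tr: "mtrace \<rho> = 0"
      and diag: "\<forall>i<m. \<forall>k<d-1. (adj (U i) * \<rho> * U i) $$ (k,k) = 0"
      using exists_rho[OF d2 m[folded d_def] Uc] by blast
    have diag_all: "(adj (U i) * \<rho> * U i) $$ (k,k) = 0" if i: "i < m" and k: "k < d" for i k
    proof (cases "k < d - 1")
      case True then show ?thesis using diag i by blast
    next
      case False
      then have kd: "k = d - 1" using k by simp
      have Ui: "unitary_mat d (U i)" using Uu i d_def by auto
      have Uic: "U i \<in> carrier_mat d d" using Uc i by auto
      have Xc: "adj (U i) * \<rho> * U i \<in> carrier_mat d d" using Uic \<rho>c by auto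
      have "0 = mtrace (adj (U i) * \<rho> * U i)" using trace_conj[OF Ui \<rho>c] tr by simp
      also have "\<dots> = (\<Sum>k'<d. (adj (U i) * \<rho> * U i) $$ (k',k'))" using Xc by (rule mtrace_carrier)
      also have "{..<d} = insert (d-1) {..<d-1}" using d2 by auto
      also have "(\<Sum>k'\<in>insert (d-1) {..<d-1}. (adj (U i) * \<rho> * U i) $$ (k',k')) = (adj (U i) * \<rho> * U i) $$ (d-1,d-1)"
        using diag i by simp
      finally show ?thesis using kd by simp
    qed
    have circ0: "mp_circuit n (U i) (\<sigma> i) \<rho> $$ (r,c) = 0" if i: "i < m" and r: "r < d" and c: "c < d" for i r c
    proof -
      have "mp_circuit n (U i) (\<sigma> i) \<rho> $$ (r,c) = (\<Sum>k<d. (mtrace (ket_proj d k * (adj (U i) * \<rho> * U i)) \<cdot>\<^sub>m \<sigma> i k) $$ (r,c))"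
        unfolding mp_circuit_def d_def using r c d_def by (simp add: msum_index)
      also have "\<dots> = (\<Sum>k<d. 0)"
      proof (rule sum.cong[OF refl])
        fix k assume k: "k \<in> {..<d}"
        have Uic: "U i \<in> carrier_mat d d" using Uc i by auto
        have Xc: "adj (U i) * \<rho> * U i \<in> carrier_mat d d" using Uic \<rho>c by auto
        have sc: "\<sigma> i k \<in> carrier_mat d d" using dens i k unfolding density_mat_def d_def by auto
        show "(mtrace (ket_proj d k * (adj (U i) * \<rho> * U i)) \<cdot>\<^sub>m \<sigma> i k) $$ (r,c) = 0"
          using mtrace_ket[OF Xc] k diag_all[OF i] sc r c by simp
      qed
      finally show ?thesis by simp
    qed
    have "\<rho> = 0\<^sub>m d d"
    proof (rule eq_matI)
      fix r c assume rc: "r < dim_row (0\<^sub>m d d :: complex mat)" "c < dim_col (0\<^sub>m d d :: complex mat)"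
      then have r: "r < d" and c: "c < d" by auto
      have "D0 n \<rho> $$ (r,c) = msum (2 ^ n) {..<m} (\<lambda>i. complex_of_real (p i) \<cdot>\<^sub>m mp_circuit n (U i) (\<sigma> i) \<rho>) $$ (r,c)"
        using DE \<rho>c d_def by simp
      also have "\<dots> = (\<Sum>i<m. complex_of_real (p i) * mp_circuit n (U i) (\<sigma> i) \<rho> $$ (r,c))"
        using r c d_def by (simp add: msum_index mp_circuit_def)
      also have "\<dots> = 0" using circ0 r c by simp
      finally have z: "D0 n \<rho> $$ (r,c) = 0" .
      have "(2::real)^(2*n) > 1" using n by (intro one_less_power) auto
      then have "(2::real)^(2*n) - 1 \<noteq> 0" by linarith
      then have "complex_of_real (1 / (2 ^ (2 * n) - 1)) \<noteq> 0" by (simp only: of_real_eq_0_iff divide_eq_0_iff) simp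
      moreover have "D0 n \<rho> $$ (r,c) = complex_of_real (1 / (2 ^ (2 * n) - 1)) * (- \<rho> $$ (r,c))"
        using D0_index[of \<rho> n r c] \<rho>c r c d_def by (simp add: tr)
      ultimately show "\<rho> $$ (r,c) = 0\<^sub>m d d $$ (r,c)"
        using z r c by simp
    qed (use \<rho>c in auto)
    then show False using nz by simp
  qed
qed


theorem lemma1:
  fixes n :: nat and S :: "nat \<Rightarrow> (nat \<Rightarrow> nat) set" and V :: "nat \<Rightarrow> complex mat"
  assumes n: "n \<ge> 1"
    and S_sub: "\<And>j. j \<le> 2 ^ n \<Longrightarrow> S j \<subseteq> pauli_star n"
    and S_cover: "(\<Union>j\<in>{..2 ^ n}. S j) = pauli_star n"
    and S_disj: "\<And>j j'. j \<le> 2 ^ n \<Longrightarrow> j' \<le> 2 ^ n \<Longrightarrow> j \<noteq> j' \<Longrightarrow> S j \<inter> S j' = {}"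
    and S_card: "\<And>j. j \<le> 2 ^ n \<Longrightarrow> card (S j) = 2 ^ n - 1"
    and S_comm: "\<And>j P Q. j \<le> 2 ^ n \<Longrightarrow> P \<in> S j \<Longrightarrow> Q \<in> S j \<Longrightarrow>
                   pauli_mat n P * pauli_mat n Q = pauli_mat n Q * pauli_mat n P"
    and S_max: "\<And>j P. j \<le> 2 ^ n \<Longrightarrow> P \<in> pauli_star n \<Longrightarrow>
                   (\<forall>Q\<in>S j. pauli_mat n P * pauli_mat n Q = pauli_mat n Q * pauli_mat n P) \<Longrightarrow> P \<in> S j"
    and V_unitary: "\<And>j. j \<le> 2 ^ n \<Longrightarrow> unitary_mat (2 ^ n) (V j)"
    and V_diag: "\<And>j. j \<le> 2 ^ n \<Longrightarrow> \<exists>s :: nat \<Rightarrow> complex. (\<forall>a. s a = 1 \<or> s a = -1) \<and>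
                   pauli_mat n ` S j = {s a \<cdot>\<^sub>m (V j * Z_op n a * adj (V j)) | a. 0 < a \<and> a < 2 ^ n}"
  shows "(\<forall>\<rho> \<in> carrier_mat (2 ^ n) (2 ^ n).
            D0 n \<rho> = channel_twirl (2 ^ n) {..2 ^ n} (\<lambda>_. 1 / (2 ^ n + 1)) (\<lambda>j. adj (V j)) (M_chan n) \<rho>)
       \<and> (\<forall>(m :: nat) (p :: nat \<Rightarrow> real) (U :: nat \<Rightarrow> complex mat) (\<sigma> :: nat \<Rightarrow> nat \<Rightarrow> complex mat).
            (\<forall>i<m. p i \<ge> 0) \<and> (\<Sum>i<m. p i) = 1 \<and> (\<forall>i<m. unitary_mat (2 ^ n) (U i)) \<and>
            (\<forall>i<m. \<forall>k<2 ^ n. density_mat (2 ^ n) (\<sigma> i k)) \<and>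
            (\<forall>\<rho> \<in> carrier_mat (2 ^ n) (2 ^ n).
               D0 n \<rho> = msum (2 ^ n) {..<m} (\<lambda>i. complex_of_real (p i) \<cdot>\<^sub>m mp_circuit n (U i) (\<sigma> i) \<rho>))
            \<longrightarrow> 2 ^ n + 1 \<le> m)"
  proof -
  show ?thesis
    using part1[OF n S_sub S_cover S_disj S_card V_unitary V_diag] part2[OF n] by blast
qed

end
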